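(* Let $\alpha>-1$, $M\ge0$, and for $n=0,1,2,\ldots$ let $$y(x)=P_n^{\alpha,\alpha,M,M}(x)=C_0P_n^{(\alpha,\alpha)}(x)-C_1x\frac{d}{dx}P_n^{(\alpha,\alpha)}(x),$$ where $$C_0=1+M\frac{2n}{\alpha+1}\binom{n+2\alpha+1}{n}+4M^2\binom{n+2\alpha+1}{n-1}^2,\qquad C_1=\frac{2M}{2\alpha+1}\binom{n+2\alpha}{n}+\frac{2M^2}{\alpha+1}\binom{n+2\alpha}{n-1}\binom{n+2\alpha+1}{n}.$$ Define $b_0(x)=b_0(n,\alpha,x)=\frac12\left[1-(-1)^n\right]$ and $b_i(x)=\frac{2^{i-1}}{i!}(-x)^i$ for $i=1,2,3,\ldots$. Then $$\sum_{i=0}^{\infty}b_i(x)y^{(i)}(x)=0 .$$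
   Context: $P_n^{(\alpha,\beta)}(x)$ denotes the classical Jacobi polynomial, orthogonal on $[-1,1]$ with respect to $(1-x)^\alpha(1+x)^\beta$ and normalized by $P_n^{(\alpha,\beta)}(1)=\binom{n+\alpha}{n}$. Binomial coefficients $\binom{a}{m}$ are generalized (real $a$), with $\binom{a}{m}=0$ for negative integers $m$. The polynomials $P_n^{\alpha,\alpha,M,M}$ are the generalized (Koornwinder) Jacobi polynomials orthogonal on $[-1,1]$ with respect to the normalized weight $\frac{\Gamma(2\alpha+2)}{2^{2\alpha+1}\Gamma(\alpha+1)^2}(1-x^2)^\alpha+M\delta(x+1)+M\delta(x-1)$. Since $y$ is a polynomial, the sum is finite. *)

theory Defs
  imports "HOL-Computational_Algebra.Polynomial" Complex_Main
begin

definition gbinom :: "real \<Rightarrow> int \<Rightarrow> real" where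
  "gbinom a m = (if m < 0 then 0 else a gchoose (nat m))"

definition jacobi_poly :: "nat \<Rightarrow> real \<Rightarrow> real \<Rightarrow> real poly" where
  "jacobi_poly n a b =
     (\<Sum>s\<le>n. smult (((real n + a) gchoose (n - s)) * ((real n + b) gchoose s))
                    ([:-1/2, 1/2:] ^ s * [:1/2, 1/2:] ^ (n - s)))"

definition koorn_C0 :: "nat \<Rightarrow> real \<Rightarrow> real \<Rightarrow> real" where
  "koorn_C0 n \<alpha> M = 1 + M * (2 * real n / (\<alpha> + 1)) * gbinom (real n + 2*\<alpha> + 1) (int n)
      + 4 * M^2 * (gbinom (real n + 2*\<alpha> + 1) (int n - 1))^2"

definition koorn_C1 :: "nat \<Rightarrow> real \<Rightarrow> real \<Rightarrow> real" where
  "koorn_C1 n \<alpha> M = (2 * M / (2*\<alpha> + 1)) * gbinom (real n + 2*\<alpha>) (int n)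
      + (2 * M^2 / (\<alpha> + 1)) * gbinom (real n + 2*\<alpha>) (int n - 1) * gbinom (real n + 2*\<alpha> + 1) (int n)"

definition koornwinder_sym :: "nat \<Rightarrow> real \<Rightarrow> real \<Rightarrow> real poly" where
  "koornwinder_sym n \<alpha> M =
     smult (koorn_C0 n \<alpha> M) (jacobi_poly n \<alpha> \<alpha>)
     - smult (koorn_C1 n \<alpha> M) ([:0, 1:] * pderiv (jacobi_poly n \<alpha> \<alpha>))"

definition bcoef :: "nat \<Rightarrow> nat \<Rightarrow> real \<Rightarrow> real" where
  "bcoef n i x = (if i = 0 then (1 - (-1) ^ n) / 2 else 2 ^ (i - 1) / fact i * (-x) ^ i)"

end

theory Submission
  imports Defs
begin

lemma higher_pderiv_zero:
  fixes p :: "real poly"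
  assumes "m > degree p"
  shows "(pderiv ^^ m) p = 0"
proof (rule poly_eqI)
  fix k
  have "coeff p (k + m) = 0" using assms by (intro coeff_eq_0) simp
  then show "coeff ((pderiv ^^ m) p) k = coeff 0 k" by (simp add: coeff_higher_pderiv)
qed

lemma poly_taylor:
  fixes p :: "real poly"
  shows "poly p (x + h) = (\<Sum>m<Suc (degree p). poly ((pderiv ^^ m) p) x / fact m * h ^ m)"
proof -
  let ?diff = "\<lambda>m t. poly ((pderiv ^^ m) p) (x + t)"
  have D: "\<forall>m t. DERIV (?diff m) t :> ?diff (Suc m) t"
  proof (intro allI)
    fix m t
    have "DERIV (\<lambda>t. poly ((pderiv ^^ m) p) (x + t)) t :> poly (pderiv ((pderiv ^^ m) p)) (x + t) * 1"
      by (rule DERIV_chain2[OF poly_DERIV]) (auto intro!: derivative_eq_intros)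
    then show "DERIV (?diff m) t :> ?diff (Suc m) t" by simp
  qed
  obtain t where "?diff 0 h = (\<Sum>m<Suc (degree p). (?diff m 0 / fact m) * h ^ m)
      + (?diff (Suc (degree p)) t / fact (Suc (degree p))) * h ^ (Suc (degree p))"
    using Maclaurin_all_le[of ?diff "?diff 0", OF refl D] by blast
  then show ?thesis by (simp add: higher_pderiv_zero del: funpow.simps)
qed

lemma parity_pderiv:
  fixes p :: "real poly"
  assumes "\<And>t. poly p (-t) = s * poly p t"
  shows "poly (pderiv p) (-x) = - s * poly (pderiv p) x"
proof -
  have "poly (pcompose p [:0,-1:]) = poly (smult s p)"
    using assms by (auto simp: poly_pcompose)
  then have "pcompose p [:0,-1:] = smult s p" by (simp add: poly_eq_poly_eq_iff)
  then have "pderiv (pcompose p [:0,-1:]) = smult s (pderiv p)" by (simp add: pderiv_smult)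
  then have "poly (pderiv (pcompose p [:0,-1:])) x = s * poly (pderiv p) x" by simp
  then show ?thesis by (simp add: pderiv_pcompose poly_pcompose pderiv_pCons)
qed

lemma jacobi_parity:
  "poly (jacobi_poly n a a) (-t) = (-1)^n * poly (jacobi_poly n a a) t"
proof -
  let ?A = "(t+1)/2" and ?B = "(t-1)/2"
  let ?c = "\<lambda>s. ((real n + a) gchoose (n - s)) * ((real n + a) gchoose s)"
  have "poly (jacobi_poly n a a) (-t) = (\<Sum>s\<le>n. ?c s * ((-1)^n * (?A^s * ?B^(n-s))))"
  proof -
    have "\<And>s. s \<le> n \<Longrightarrow> (-?A)^s * (-?B)^(n-s) = (-1)^n * (?A^s * ?B^(n-s))"
      by (simp add: power_minus' power_add[symmetric] field_simps)
    moreover have "poly [:-1/2, 1/2:] (-t) = -?A" "poly [:1/2, 1/2:] (-t) = -?B" by (simp_all add: field_simps)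
    ultimately show ?thesis
      unfolding jacobi_poly_def poly_sum
      by (intro sum.cong) (simp_all add: poly_power del: pCons_0_0 poly_pCons)
  qed
  also have "\<dots> = (\<Sum>s\<le>n. ?c (n - s) * ((-1)^n * (?A^(n-s) * ?B^(n-(n-s)))))"
    by (subst (1 2) atMost_atLeast0, subst sum.atLeastAtMost_rev) simp
  also have "\<dots> = (-1)^n * (\<Sum>s\<le>n. ?c s * (?B^s * ?A^(n-s)))"
    unfolding sum_distrib_left by (intro sum.cong) auto
  also have "(\<Sum>s\<le>n. ?c s * (?B^s * ?A^(n-s))) = poly (jacobi_poly n a a) t"
    unfolding jacobi_poly_def poly_sum by (intro sum.cong) (simp_all add: poly_power field_simps)
  finally show ?thesis .
qed

theorem theorem4:
  fixes \<alpha> M x :: real and n :: nat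
  assumes "\<alpha> > -1" and "M \<ge> 0"
  shows "(\<Sum>i. bcoef n i x * poly ((pderiv ^^ i) (koornwinder_sym n \<alpha> M)) x) = 0"
proof -
  define y where "y = koornwinder_sym n \<alpha> M"
  define J where "J = jacobi_poly n \<alpha> \<alpha>"
  define Y where "Y = (\<lambda>i. poly ((pderiv ^^ i) y) x)"
  define D where "D = Suc (degree y)"
  have JP: "\<And>t. poly J (-t) = (-1)^n * poly J t" unfolding J_def by (rule jacobi_parity)
  have JD: "\<And>t. poly (pderiv J) (-t) = - ((-1)^n) * poly (pderiv J) t"
    by (rule parity_pderiv) (rule JP)
  have yp: "poly y (-x) = (-1)^n * poly y x"
    unfolding y_def koornwinder_sym_def J_def[symmetric] using JP[of x] JD[of x]
    by (simp add: algebra_simps)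
  have fin: "(\<Sum>i. bcoef n i x * Y i) = (\<Sum>i<D. bcoef n i x * Y i)"
    by (rule suminf_finite) (auto simp: Y_def D_def higher_pderiv_zero)
  have pt: "\<And>i. bcoef n i x * Y i = (1/2) * (Y i / fact i * (-2*x)^i)
      - (if i = 0 then (-1)^n/2 * Y 0 else 0)"
  proof -
    fix i show "bcoef n i x * Y i = (1/2) * (Y i / fact i * (-2*x)^i)
      - (if i = 0 then (-1)^n/2 * Y 0 else 0)"
    proof (cases i)
      case 0 then show ?thesis by (simp add: bcoef_def field_simps)
    next
      case (Suc k)
      have e: "(-2*x)^i = 2 * 2^k * (-x)^i" using Suc by (simp add: power_mult_distrib[symmetric])
      show ?thesis unfolding e using Suc by (simp add: bcoef_def)
    qed
  qed
  have "(\<Sum>i<D. bcoef n i x * Y i) = (1/2) * (\<Sum>i<D. Y i / fact i * (-2*x)^i)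
       - (\<Sum>i<D. (if i = 0 then (-1)^n/2 * Y 0 else 0))"
    unfolding pt by (simp add: sum_subtractf sum_distrib_left)
  also have "(\<Sum>i<D. (if i = 0 then (-1)^n/2 * Y 0 else 0)) = (-1)^n/2 * Y 0"
    by (simp add: D_def)
  also have "(\<Sum>i<D. Y i / fact i * (-2*x)^i) = poly y (x + -2*x)"
    unfolding Y_def D_def by (rule poly_taylor[symmetric])
  also have "x + -2*x = -x" by simp
  finally show ?thesis using fin yp by (simp add: Y_def y_def)
qed

end
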